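(* Let $\lambda$ be a partition with $n$ parts and let $\beta \in U_\lambda(n)$. If $\beta \notin UBP_\lambda(n)$, then the terminal pair $(\lambda,\beta)$ is not nonpermutable; i.e. there is a permutation $\pi \neq (1,\dots,n)$ of $[n]$ with $\mathcal{LD}_\lambda(\beta;\pi) \neq \emptyset$.
   Context: Fix an integer $n \geq 1$ and write $[k] = \{1,\dots,k\}$. A partition is $\lambda = (\lambda_1,\dots,\lambda_n)$ with $\lambda_1 \geq \dots \geq \lambda_n \geq 0$ integers. Let $R_\lambda \subseteq [n-1]$ be the set of $q \in [n-1]$ with $\lambda_q > \lambda_{q+1}$; write its elements $q_1 < \dots < q_r$, and set $q_0 := 0$, $q_{r+1} := n$. For $h \in [r+1]$ the $h$-th carrel is the index interval $\{q_{h-1}+1,\dots,q_h\}$. A $\lambda$-tuple is an $n$-tuple $\beta$ with entries in $[n]$, considered with this carrel structure; it is upper if $\beta_i \geq i$ for all $i$. $U_\lambda(n)$ is the set of upper $\lambda$-tuples. Critical indices: for $\beta \in U_\lambda(n)$ and $h \in [r+1]$, set $x_1 := q_h$; given $x_{u-1}$, if some index $x$ with $q_{h-1} < x < x_{u-1}$ satisfies $\beta_{x_{u-1}} - \beta_x > x_{u-1} - x$, let $x_u$ be the largest such $x$, otherwise stop. The $x_u$ are the critical indices of $\beta$ in carrel $h$. For $i \in [n]$ let $x(i)$ be the smallest critical index in the carrel of $i$ with $x(i) \geq i$. The $\lambda$-platform is $\Xi_\lambda(\beta) := \xi$ with $\xi_i := \beta_{x(i)}$. $UBP_\lambda(n)$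 is the set of $\beta \in U_\lambda(n)$ with $\beta_i \leq \Xi_\lambda(\beta)_i$ for all $i$. Lattice paths: lattice points are integer pairs $(a,b)$ with $a \geq 0$, $b \geq 1$. A lattice path is a sequence of lattice points each consecutive step of which is $(a,b) \to (a+1,b)$ (easterly) or $(a,b) \to (a,b+1)$ (southerly). An $n$-path is $(\Lambda_1,\dots,\Lambda_n)$ with $\Lambda_m$ a lattice path starting at $(n-m,m)$. The terminals of $(\lambda,\beta)$ are $P_m := (\lambda_m + n - m, \beta_m)$, $m \in [n]$. For a permutation $\pi$ of $[n]$, $\mathcal{LD}_\lambda(\beta;\pi)$ is the set of $n$-paths with $\Lambda_m$ ending at $P_{\pi_m}$ for every $m$ and with no two distinct components sharing a lattice point. The pair $(\lambda,\beta)$ is nonpermutable if $\mathcal{LD}_\lambda(\beta;\pi) = \emptyset$ for every permutation $\pi \neq (1,\dots,n)$. *)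

theory Defs
  imports "HOL-Combinatorics.Permutations"
begin

text \<open>Indices run over {1..n}; a partition and a tuple are functions nat \<Rightarrow> nat
  of which only the values at 1..n matter.\<close>

definition is_partition :: "nat \<Rightarrow> (nat \<Rightarrow> nat) \<Rightarrow> bool" where
  "is_partition n lam \<longleftrightarrow> (\<forall>i\<in>{1..<n}. lam (Suc i) \<le> lam i)"

definition breaks :: "nat \<Rightarrow> (nat \<Rightarrow> nat) \<Rightarrow> nat set" where
  "breaks n lam = {q \<in> {1..<n}. lam (Suc q) < lam q}"

definition carrel_end :: "nat \<Rightarrow> (nat \<Rightarrow> nat) \<Rightarrow> nat \<Rightarrow> nat" where
  "carrel_end n lam i = (LEAST q. q \<in> breaks n lam \<union> {n} \<and> i \<le> q)"

text \<open>Value q_{h-1} for the carrel {q_{h-1}+1..q_h} containing index i.\<close>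
definition carrel_start :: "nat \<Rightarrow> (nat \<Rightarrow> nat) \<Rightarrow> nat \<Rightarrow> nat" where
  "carrel_start n lam i = (GREATEST q. q \<in> breaks n lam \<union> {0} \<and> q < i)"

definition upper_tuple :: "nat \<Rightarrow> (nat \<Rightarrow> nat) \<Rightarrow> bool" where
  "upper_tuple n beta \<longleftrightarrow> (\<forall>i\<in>{1..n}. beta i \<in> {1..n} \<and> i \<le> beta i)"

definition crit_cond :: "(nat \<Rightarrow> nat) \<Rightarrow> nat \<Rightarrow> nat \<Rightarrow> bool" where
  "crit_cond beta y x \<longleftrightarrow> int (beta y) - int (beta x) > int y - int x"

inductive critical :: "nat \<Rightarrow> (nat \<Rightarrow> nat) \<Rightarrow> (nat \<Rightarrow> nat) \<Rightarrow> nat \<Rightarrow> bool"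
  for n lam beta where
  crit_end: "q \<in> breaks n lam \<union> {n} \<Longrightarrow> critical n lam beta q"
| crit_step: "critical n lam beta y \<Longrightarrow>
    (\<exists>x. carrel_start n lam y < x \<and> x < y \<and> crit_cond beta y x) \<Longrightarrow>
    critical n lam beta (GREATEST x. carrel_start n lam y < x \<and> x < y \<and> crit_cond beta y x)"

definition crit_above :: "nat \<Rightarrow> (nat \<Rightarrow> nat) \<Rightarrow> (nat \<Rightarrow> nat) \<Rightarrow> nat \<Rightarrow> nat" where
  "crit_above n lam beta i =
     (LEAST x. critical n lam beta x \<and> i \<le> x \<and> x \<le> carrel_end n lam i)"

definition platform :: "nat \<Rightarrow> (nat \<Rightarrow> nat) \<Rightarrow> (nat \<Rightarrow> nat) \<Rightarrow> nat \<Rightarrow> nat" where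
  "platform n lam beta i = beta (crit_above n lam beta i)"

definition UBP :: "nat \<Rightarrow> (nat \<Rightarrow> nat) \<Rightarrow> (nat \<Rightarrow> nat) \<Rightarrow> bool" where
  "UBP n lam beta \<longleftrightarrow> upper_tuple n beta \<and>
     (\<forall>i\<in>{1..n}. beta i \<le> platform n lam beta i)"

text \<open>Lattice points (a,b) with a \<ge> 0, b \<ge> 1; paths with easterly/southerly steps.\<close>
definition lattice_path :: "(nat \<times> nat) list \<Rightarrow> bool" where
  "lattice_path ps \<longleftrightarrow> ps \<noteq> [] \<and> (\<forall>p\<in>set ps. 1 \<le> snd p) \<and>
     (\<forall>k. Suc k < length ps \<longrightarrow>
        ps ! Suc k = (Suc (fst (ps ! k)), snd (ps ! k)) \<or>
        ps ! Suc k = (fst (ps ! k), Suc (snd (ps ! k))))"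

definition terminal :: "nat \<Rightarrow> (nat \<Rightarrow> nat) \<Rightarrow> (nat \<Rightarrow> nat) \<Rightarrow> nat \<Rightarrow> nat \<times> nat" where
  "terminal n lam beta m = (lam m + n - m, beta m)"

definition LD :: "nat \<Rightarrow> (nat \<Rightarrow> nat) \<Rightarrow> (nat \<Rightarrow> nat) \<Rightarrow> (nat \<Rightarrow> nat)
                   \<Rightarrow> (nat \<Rightarrow> (nat \<times> nat) list) set" where
  "LD n lam beta \<pi> = {\<Lambda>.
     (\<forall>m. m \<notin> {1..n} \<longrightarrow> \<Lambda> m = []) \<and>
     (\<forall>m\<in>{1..n}. lattice_path (\<Lambda> m) \<and> hd (\<Lambda> m) = (n - m, m) \<and>
                 last (\<Lambda> m) = terminal n lam beta (\<pi> m)) \<and>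
     (\<forall>m\<in>{1..n}. \<forall>m'\<in>{1..n}. m \<noteq> m' \<longrightarrow> set (\<Lambda> m) \<inter> set (\<Lambda> m') = {})}"

definition nonpermutable :: "nat \<Rightarrow> (nat \<Rightarrow> nat) \<Rightarrow> (nat \<Rightarrow> nat) \<Rightarrow> bool" where
  "nonpermutable n lam beta \<longleftrightarrow>
     (\<forall>\<pi>. \<pi> permutes {1..n} \<and> \<pi> \<noteq> id \<longrightarrow> LD n lam beta \<pi> = {})"

end

theory Submission
  imports Defs
begin


definition hpath :: "(nat \<Rightarrow> nat) \<Rightarrow> nat \<Rightarrow> nat \<Rightarrow> (nat \<times> nat) list" where
  "hpath h s e = map (\<lambda>u. (u - h u, h u)) [s..<Suc e]"

lemma hpath_nth: "k < Suc e - s \<Longrightarrow> hpath h s e ! k = (s + k - h (s + k), h (s + k))"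
  by (simp add: hpath_def del: upt_Suc)

lemma hpath_length: "length (hpath h s e) = Suc e - s" by (simp add: hpath_def del: upt_Suc)

lemma hpath_set: "set (hpath h s e) = (\<lambda>u. (u - h u, h u)) ` {s..e}"
  by (auto simp: hpath_def atLeastLessThanSuc_atLeastAtMost)

lemma hpath_hd: "s \<le> e \<Longrightarrow> hd (hpath h s e) = (s - h s, h s)"
  by (simp add: hpath_def hd_map del: upt_Suc)

lemma hpath_last: "s \<le> e \<Longrightarrow> last (hpath h s e) = (e - h e, h e)"
  by (simp add: hpath_def last_map del: upt_Suc)

lemma hpath_lattice:
  assumes se: "s \<le> e"
    and step: "\<And>u. s \<le> u \<Longrightarrow> u < e \<Longrightarrow> h (Suc u) = h u \<or> h (Suc u) = Suc (h u)"
    and bnd: "\<And>u. s \<le> u \<Longrightarrow> u \<le> e \<Longrightarrow> 1 \<le> h u \<and> h u \<le> u"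
  shows "lattice_path (hpath h s e)"
proof -
  have 1: "hpath h s e \<noteq> []" using se by (simp add: hpath_def del: upt_Suc)
  have 2: "\<forall>p\<in>set (hpath h s e). 1 \<le> snd p" using bnd by (auto simp: hpath_set)
  have 3: "hpath h s e ! Suc k = (Suc (fst (hpath h s e ! k)), snd (hpath h s e ! k)) \<or>
        hpath h s e ! Suc k = (fst (hpath h s e ! k), Suc (snd (hpath h s e ! k)))"
    if k: "Suc k < length (hpath h s e)" for k
  proof -
    have k': "Suc k < Suc e - s" using k by (simp add: hpath_length)
    have e1: "hpath h s e ! Suc k = (s + Suc k - h (s + Suc k), h (s + Suc k))" using k' by (rule hpath_nth)
    have e0: "hpath h s e ! k = (s + k - h (s + k), h (s + k))" using k' by (intro hpath_nth) simp
    have st: "h (Suc (s+k)) = h (s+k) \<or> h (Suc (s+k)) = Suc (h (s+k))" using step k' by auto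
    have b0: "h (s+k) \<le> s + k" using bnd k' by auto
    show ?thesis using st b0 e0 e1 by auto
  qed
  show ?thesis unfolding lattice_path_def using 1 2 3 by blast
qed

lemma hpath_disj:
  assumes "\<And>u. s \<le> u \<Longrightarrow> u \<le> e \<Longrightarrow> s' \<le> u \<Longrightarrow> u \<le> e' \<Longrightarrow> h u \<noteq> h' u"
    and "\<And>u. s \<le> u \<Longrightarrow> u \<le> e \<Longrightarrow> h u \<le> u"
    and "\<And>u. s' \<le> u \<Longrightarrow> u \<le> e' \<Longrightarrow> h' u \<le> u"
  shows "set (hpath h s e) \<inter> set (hpath h' s' e') = {}"
proof -
  { fix u v assume u: "u \<in> {s..e}" and v: "v \<in> {s'..e'}" and eq: "(u - h u, h u) = (v - h' v, h' v)"
    then have "h u = h' v" "u - h u = v - h' v" by auto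
    moreover have "h u \<le> u" "h' v \<le> v" using u v assms(2,3) by auto
    ultimately have "u = v" by linarith
    with u v eq assms(1) have False by auto }
  thus ?thesis unfolding hpath_set by fastforce
qed



lemma five_cases:
  fixes m a b q :: nat
  obtains (Lo) "m < a" | (Cy) "a \<le> m" "m < b" | (Bb) "m = b" | (Up) "b < m" "m \<le> q" | (Hi) "q < m"
  by linarith

lemma construction:
  fixes n L a b q :: nat and lam beta :: "nat \<Rightarrow> nat"
  assumes ab: "a < b" and bq: "b \<le> q" and qn: "q \<le> n" and a1: "1 \<le> a" and L1: "1 \<le> L"
    and lamC: "\<And>k. a \<le> k \<Longrightarrow> k \<le> q \<Longrightarrow> lam k = L"
    and lamLow: "\<And>k. 1 \<le> k \<Longrightarrow> k < a \<Longrightarrow> L \<le> lam k"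
    and lamHigh: "\<And>k. q < k \<Longrightarrow> k \<le> n \<Longrightarrow> lam k < L"
    and lamMono: "\<And>k k'. 1 \<le> k \<Longrightarrow> k \<le> k' \<Longrightarrow> k' \<le> n \<Longrightarrow> lam k' \<le> lam k"
    and up: "upper_tuple n beta"
    and betaA: "\<And>k. a < k \<Longrightarrow> k \<le> b \<Longrightarrow> beta k < beta a"
    and betaB: "\<And>k. b < k \<Longrightarrow> k \<le> q \<Longrightarrow> beta b + k < beta k + b"
  shows "\<exists>\<pi>. \<pi> permutes {1..n} \<and> \<pi> \<noteq> id \<and> LD n lam beta \<pi> \<noteq> {}"
proof -
  have bu: "\<And>k. 1 \<le> k \<Longrightarrow> k \<le> n \<Longrightarrow> k \<le> beta k \<and> beta k \<le> n"
    using up unfolding upper_tuple_def by auto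
  define T0 where "T0 = n + L - 1"
  define S where "S = beta b - b + 2"
  define G where "G k u = k + (u - T0) - (if S \<le> u - T0 then 1 else 0)" for k u
  define H where "H m u = (if a \<le> m \<and> m < b then m + (u - T0)
      else if m = b then min (beta a) (G b u)
      else if b < m \<and> m \<le> q then G m u else m + (u - (n + lam m)))" for m u
  define E where "E m = (if a \<le> m \<and> m < b then n + L + beta (Suc m) - Suc m
      else if m = b then n + L + beta a - a else n + lam m + beta m - m)" for m
  define \<pi> where "\<pi> m = (if a \<le> m \<and> m < b then Suc m else if m = b then a else m)" for m
  define \<Lambda> where "\<Lambda> m = (if m \<in> {1..n} then hpath (H m) n (E m) else [])" for m
  have ba: "beta a \<ge> a" "beta a \<le> n" "beta b \<ge> b" using bu[of a] bu[of b] ab bq qn a1 by auto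
  have bab: "beta b < beta a" using betaA[of b] ab by auto
  have HLo: "H m u = m + (u - (n + lam m))" "E m = n + lam m + beta m - m" if "m < a" for m u
    using that ab by (auto simp: H_def E_def)
  have HCy: "H m u = m + (u - T0)" "E m = n + L + beta (Suc m) - Suc m" if "a \<le> m" "m < b" for m u
    using that by (auto simp: H_def E_def)
  have HBb: "H b u = min (beta a) (G b u)" "E b = n + L + beta a - a" for u
    by (auto simp: H_def E_def)
  have HUp: "H m u = G m u" "E m = n + L + beta m - m" if "b < m" "m \<le> q" for m u
    using that ab lamC[of m] by (auto simp: H_def E_def)
  have HHi: "H m u = m + (u - (n + lam m))" "E m = n + lam m + beta m - m" if "q < m" for m u
    using that ab bq by (auto simp: H_def E_def)
  have F1: "n \<le> E m" if "1 \<le> m" "m \<le> n" for m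
  proof (cases m rule: five_cases[where a=a and b=b and q=q])
    case Lo then show ?thesis using bu[of m] that HLo by (simp; arith)
  next
    case Cy then show ?thesis using bu[of "Suc m"] that ab bq qn HCy by (simp; arith)
  next
    case Bb then show ?thesis using ba HBb by (simp; arith)
  next
    case Up then show ?thesis using bu[of m] that HUp by (simp; arith)
  next
    case Hi then show ?thesis using bu[of m] that HHi by (simp; arith)
  qed
  have F2: "H m n = m" if "1 \<le> m" "m \<le> n" for m
  proof (cases m rule: five_cases[where a=a and b=b and q=q])
    case Lo then show ?thesis using HLo by (simp; arith)
  next
    case Cy then show ?thesis using L1 HCy by (simp add: T0_def; arith)
  next
    case Bb then show ?thesis using ab ba bab L1 HBb by (simp add: G_def T0_def S_def; arith)
  next
    case Up then show ?thesis using ab L1 HUp by (simp add: G_def T0_def S_def; arith)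
  next
    case Hi then show ?thesis using HHi by (simp; arith)
  qed
  have F3: "1 \<le> H m u \<and> H m u \<le> u" if "1 \<le> m" "m \<le> n" "n \<le> u" for m u
  proof (cases m rule: five_cases[where a=a and b=b and q=q])
    case Lo then show ?thesis using HLo that by (simp; arith)
  next
    case Cy then show ?thesis using L1 HCy that by (simp add: T0_def; arith)
  next
    case Bb
    have "1 \<le> G b u \<and> G b u \<le> u" using that L1 Bb by (simp add: G_def T0_def S_def; arith)
    then show ?thesis using Bb HBb ba a1 by (simp add: min_def)
  next
    case Up then show ?thesis using L1 HUp that by (simp add: G_def T0_def S_def; arith)
  next
    case Hi then show ?thesis using HHi that by (simp; arith)
  qed
  have G4: "G m (Suc u) = G m u \<or> G m (Suc u) = Suc (G m u)" for m u
    by (simp add: G_def; arith)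
  have F4: "H m (Suc u) = H m u \<or> H m (Suc u) = Suc (H m u)" for m u
  proof (cases m rule: five_cases[where a=a and b=b and q=q])
    case Lo then show ?thesis using HLo by (simp; arith)
  next
    case Cy then show ?thesis using HCy by (simp; arith)
  next
    case Bb then show ?thesis using HBb G4[of b u] by (auto simp: min_def)
  next
    case Up then show ?thesis using HUp G4[of m u] by simp
  next
    case Hi then show ?thesis using HHi by (simp; arith)
  qed
  have F5: "H m (E m) = beta (\<pi> m) \<and> E m - beta (\<pi> m) = lam (\<pi> m) + n - \<pi> m" if "1 \<le> m" "m \<le> n" for m
  proof (cases m rule: five_cases[where a=a and b=b and q=q])
    case Lo
    have p: "\<pi> m = m" using Lo ab by (simp add: \<pi>_def)
    have bm: "m \<le> beta m" using bu[of m] that by simp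
    show ?thesis using HLo[of m] Lo p bm by (simp; arith)
  next
    case Cy
    have l: "lam (Suc m) = L" using Cy bq by (intro lamC) auto
    have p: "\<pi> m = Suc m" using Cy by (simp add: \<pi>_def)
    have bm: "Suc m \<le> beta (Suc m)" using bu[of "Suc m"] Cy bq qn by simp
    show ?thesis using HCy[of m] Cy l p bm L1 unfolding T0_def by (simp; arith)
  next
    case Bb
    have p: "\<pi> m = a" using Bb ab by (simp add: \<pi>_def)
    have l: "lam a = L" using ab bq by (intro lamC) auto
    have e: "E b - T0 = beta a - a + 1" using HBb ba L1 unfolding T0_def by (simp; arith)
    have s: "S \<le> E b - T0" using e ab bab ba unfolding S_def by (simp; arith)
    have g: "G b (E b) = beta a + b - a" using s e ab ba unfolding G_def by (simp; arith)
    have h: "H b (E b) = beta a" using g HBb ab by simp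
    show ?thesis using h p l Bb HBb ba by (simp; arith)
  next
    case Up
    have p: "\<pi> m = m" using Up ab by (simp add: \<pi>_def)
    have l: "lam m = L" using Up ab by (intro lamC) auto
    have bb: "beta b + m < beta m + b" using betaB Up by simp
    have bm: "m \<le> beta m" using bb ba by simp
    have e: "E m - T0 = beta m - m + 1" using HUp[of m] Up bm L1 unfolding T0_def by (simp; arith)
    have s: "S \<le> E m - T0" using e bb ba bm unfolding S_def by (simp; arith)
    have g: "G m (E m) = beta m" using s e bm unfolding G_def by (simp; arith)
    show ?thesis using g p l HUp[of m] Up bm by (simp; arith)
  next
    case Hi
    have p: "\<pi> m = m" using Hi ab bq by (simp add: \<pi>_def)
    have bm: "m \<le> beta m" using bu[of m] that by simp
    show ?thesis using HHi[of m] p bm Hi by (simp; arith)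
  qed
  have T0: "T0 + 1 = n + L" using L1 by (simp add: T0_def)
  have S2: "2 \<le> S" by (simp add: S_def)
  have G1: "G k u \<le> k + (u - T0)" for k u by (simp add: G_def; arith)
  have G2: "k + (u - T0) \<le> G k u + 1" for k u by (simp add: G_def; arith)
  have G3: "k + (u - (n + L)) \<le> G k u" for k u using T0 S2 by (simp add: G_def; arith)
  have G4: "k < k' \<Longrightarrow> G k u < G k' u" for k k' u using S2 by (simp add: G_def; arith)
  have G5: "u - T0 < S \<Longrightarrow> G k u = k + (u - T0)" for k u by (simp add: G_def; arith)
  have G6: "S \<le> u - T0 \<Longrightarrow> G k u + 1 = k + (u - T0)" for k u using S2 by (simp add: G_def; arith)
  have F6: "H m u < H m' u" if "1 \<le> m" "m < m'" "m' \<le> n" "n \<le> u" "u \<le> E m" "u \<le> E m'" for m m' u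
  proof -
  have mono: "lam m' \<le> lam m" using lamMono[of m m'] that by simp
  show ?thesis
  proof (cases m rule: five_cases[where a=a and b=b and q=q])
    case Lo note c1 = this
    have lm: "L \<le> lam m" using lamLow that c1 by auto
    have hm: "H m u \<le> m + (u - (n + L))" using HLo(1)[of m u] c1 lm by (simp; arith)
    show ?thesis
    proof (cases m' rule: five_cases[where a=a and b=b and q=q])
      case Lo then show ?thesis using HLo[of m] HLo[of m'] c1 mono that by (simp; arith)
    next
      case Cy then show ?thesis using hm HCy(1)[of m' u] c1 T0 that by (simp; arith)
    next
      case Bb
      have "H m u < beta a" using hm HBb that Bb c1 ba by (simp; arith)
      moreover have "H m u < G b u" using hm G3[of b u] c1 ab by (simp; arith)
      ultimately show ?thesis using HBb Bb by (simp; arith)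
    next
      case Up then show ?thesis using hm HUp(1)[of m' u] G3[of m' u] c1 that by (simp; arith)
    next
      case Hi then show ?thesis using HLo[of m] HHi[of m'] c1 mono that by (simp; arith)
    qed
  next
    case Cy note c1 = this
    show ?thesis
    proof (cases m' rule: five_cases[where a=a and b=b and q=q])
      case Lo then show ?thesis using c1 that by (simp; arith)
    next
      case Cy then show ?thesis using HCy(1)[of m u] HCy(1)[of m' u] c1 that by (simp; arith)
    next
      case Bb
      have bs2: "Suc m \<le> beta (Suc m)" using bu[of "Suc m"] c1 bq qn by (simp; arith)
      have e: "u - T0 \<le> beta (Suc m) - m" using HCy[of m] c1 that T0 bs2 by (simp; arith)
      have bs: "beta (Suc m) < beta a" using betaA[of "Suc m"] c1 by (simp; arith)
      show ?thesis
      proof (cases "beta a \<le> G b u")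
        case True then show ?thesis using HCy(1)[of m u] HBb Bb c1 e bs bs2 by (simp; arith)
      next
        case False
        show ?thesis
        proof (cases "u - T0 < S")
          case True then show ?thesis using G5[where k=b and u=u] HCy(1)[of m u] HBb Bb c1 False by (simp; arith)
        next
          case F2: False
          have "m \<noteq> b - 1"
          proof
            assume "m = b - 1"
            hence "Suc m = b" using ab by (simp; arith)
            thus False using e F2 S_def ba by (simp; arith)
          qed
          then show ?thesis using G6[where k=b and u=u] HCy(1)[of m u] HBb Bb c1 False F2 by (simp; arith)
        qed
      qed
    next
      case Up then show ?thesis using HCy(1)[of m u] HUp(1)[of m' u] G2[of m' u] c1 by (simp; arith)
    next
      case Hi
      have "lam m' < L" using lamHigh Hi that by (simp; arith)
      then show ?thesis using HCy(1)[of m u] HHi(1)[of m' u] c1 Hi T0 bq by (simp; arith)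
    qed
  next
    case Bb note c1 = this
    have hb: "H m u \<le> G b u" using HBb(1)[of u] c1 by simp
    show ?thesis
    proof (cases m' rule: five_cases[where a=a and b=b and q=q])
      case Up
      have "G b u < G m' u" using G4[of b m' u] Up by simp
      moreover have "H m' u = G m' u" using HUp(1)[of m' u] Up by simp
      ultimately show ?thesis using hb by linarith
    next
      case Hi
      have "lam m' < L" using lamHigh Hi that by (simp; arith)
      then show ?thesis using hb G1[of b u] HHi(1)[of m' u] c1 Hi T0 bq by (simp; arith)
    qed (use c1 that ab bq in simp_all)
  next
    case Up note c1 = this
    show ?thesis
    proof (cases m' rule: five_cases[where a=a and b=b and q=q])
      case Up then show ?thesis using HUp(1)[of m u] HUp(1)[of m' u] G4[of m m' u] c1 that by (simp; arith)
    next
      case Hi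
      have "lam m' < L" using lamHigh Hi that by (simp; arith)
      then show ?thesis using HUp(1)[of m u] G1[of m u] HHi(1)[of m' u] c1 Hi T0 that by (simp; arith)
    qed (use c1 that ab bq in simp_all)
  next
    case Hi note c1 = this
    show ?thesis
    proof (cases m' rule: five_cases[where a=a and b=b and q=q])
      case Hi then show ?thesis using HHi[of m] HHi[of m'] c1 mono that by (simp; arith)
    qed (use c1 that ab bq in simp_all)
  qed
  qed
  have perm: "\<pi> permutes {1..n}"
  proof (rule inj_imp_permutes)
    show "inj_on \<pi> {1..n}" using ab by (auto simp: inj_on_def \<pi>_def split: if_splits)
    show "finite {1..n}" by simp
    show "\<pi> x \<in> {1..n}" if "x \<in> {1..n}" for x using that ab bq qn a1 by (auto simp: \<pi>_def)
    show "\<pi> x = x" if "x \<notin> {1..n}" for x using that ab bq qn a1 by (auto simp: \<pi>_def)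
  qed
  have nid: "\<pi> \<noteq> id"
  proof
    assume "\<pi> = id"
    hence "\<pi> a = a" by simp
    thus False using ab by (simp add: \<pi>_def)
  qed
  have mem: "\<Lambda> \<in> LD n lam beta \<pi>"
    unfolding LD_def
  proof (intro CollectI conjI allI impI ballI)
    fix m assume "m \<notin> {1..n}" thus "\<Lambda> m = []" unfolding \<Lambda>_def by auto
  next
    fix m assume m: "m \<in> {1..n}"
    hence m1: "1 \<le> m" "m \<le> n" by auto
    have lp: "\<Lambda> m = hpath (H m) n (E m)" using m by (simp add: \<Lambda>_def)
    show "lattice_path (\<Lambda> m)" unfolding lp
      by (rule hpath_lattice) (use F1[OF m1] F4 F3[OF m1] in auto)
    show "hd (\<Lambda> m) = (n - m, m)" unfolding lp using hpath_hd[OF F1[OF m1]] F2[OF m1] by simp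
    show "last (\<Lambda> m) = terminal n lam beta (\<pi> m)" unfolding lp terminal_def
      using hpath_last[OF F1[OF m1]] F5[OF m1] by simp
  next
    fix m m' assume m: "m \<in> {1..n}" and m': "m' \<in> {1..n}" and ne: "m \<noteq> m'"
    have lp: "\<Lambda> m = hpath (H m) n (E m)" "\<Lambda> m' = hpath (H m') n (E m')" using m m' by (simp_all add: \<Lambda>_def)
    show "set (\<Lambda> m) \<inter> set (\<Lambda> m') = {}" unfolding lp
    proof (rule hpath_disj)
      fix u assume u: "n \<le> u" "u \<le> E m" "n \<le> u" "u \<le> E m'"
      show "H m u \<noteq> H m' u"
      proof (cases "m < m'")
        case True then show ?thesis using F6[of m m' u] m m' u by auto
      next
        case False then have "m' < m" using ne by simp
        then show ?thesis using F6[of m' m u] m m' u by auto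
      qed
    next
      fix u assume "n \<le> u" "u \<le> E m" thus "H m u \<le> u" using F3[of m u] m by auto
    next
      fix u assume "n \<le> u" "u \<le> E m'" thus "H m' u \<le> u" using F3[of m' u] m' by auto
    qed
  qed
  show ?thesis using perm nid mem by blast
qed



lemma crit_le: "critical n lam beta y \<Longrightarrow> y \<le> n"
proof (induction rule: critical.induct)
  case (crit_end q) thus ?case by (auto simp: breaks_def)
next
  case (crit_step y)
  define P where "P = (\<lambda>x. carrel_start n lam y < x \<and> x < y \<and> crit_cond beta y x)"
  from crit_step.hyps(2) obtain x where "P x" unfolding P_def by blast
  hence "P (Greatest P)" by (rule GreatestI_nat[where b=y]) (auto simp: P_def)
  thus ?case using crit_step.IH unfolding P_def by simp
qed

lemma critA:
  assumes crit: "critical n lam beta y"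
    and q: "q \<in> breaks n lam \<union> {n}" and qmin: "\<And>q'. q' \<in> breaks n lam \<union> {n} \<Longrightarrow> i \<le> q' \<Longrightarrow> q \<le> q'"
    and iy: "i \<le> y" and yq: "y \<le> q"
  shows "\<forall>k. y < k \<and> k \<le> q \<longrightarrow> int (beta y) - int y < int (beta k) - int k"
  using crit iy yq
proof (induction rule: critical.induct)
  case (crit_end q0)
  then have "q \<le> q0" using qmin by auto
  then show ?case using crit_end by auto
next
  case (crit_step y)
  define P where "P = (\<lambda>x. carrel_start n lam y < x \<and> x < y \<and> crit_cond beta y x)"
  from crit_step.hyps(2) obtain x0 where "P x0" unfolding P_def by blast
  hence Px: "P (Greatest P)" by (rule GreatestI_nat[where b=y]) (auto simp: P_def)
  have maxi: "k \<le> Greatest P" if "P k" for k using that by (rule Greatest_le_nat[where b=y]) (auto simp: P_def)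
  define x' where "x' = Greatest P"
  have ix: "i \<le> x'" "x' \<le> q" using crit_step.prems unfolding x'_def P_def by auto
  have yn: "y \<le> n" using crit_step.hyps(1) by (rule crit_le)
  have yq: "y \<le> q"
  proof (rule ccontr)
    assume "\<not> y \<le> q"
    hence qy: "q < y" by simp
    hence "q \<in> breaks n lam" using q yn by auto
    hence "q \<le> carrel_start n lam y" unfolding carrel_start_def
      using Greatest_le_nat[where P="\<lambda>q'. q' \<in> breaks n lam \<union> {0} \<and> q' < y" and b=y and k=q] qy by auto
    moreover have "carrel_start n lam y < x'" using Px unfolding x'_def P_def by simp
    ultimately show False using ix by simp
  qed
  have xy: "x' < y" using Px unfolding x'_def P_def by simp
  have IH: "\<forall>k. y < k \<and> k \<le> q \<longrightarrow> int (beta y) - int y < int (beta k) - int k"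
    using crit_step.IH ix xy yq by simp
  have cc: "int (beta y) - int (beta x') > int y - int x'" using Px unfolding x'_def P_def crit_cond_def by simp
  have mid: "int (beta y) - int (beta k) \<le> int y - int k" if "x' < k" "k < y" for k
  proof (rule ccontr)
    assume "\<not> ?thesis"
    hence "P k" using that Px unfolding P_def x'_def crit_cond_def by auto
    hence "k \<le> x'" using maxi unfolding x'_def by simp
    thus False using that by simp
  qed
  have fin: "\<forall>k. x' < k \<and> k \<le> q \<longrightarrow> int (beta x') - int x' < int (beta k) - int k"
  proof (intro allI impI)
    fix k assume k: "x' < k \<and> k \<le> q"
    show "int (beta x') - int x' < int (beta k) - int k"
    proof (cases "k < y")
      case True then show ?thesis using mid[of k] k cc by linarith
    next
      case False
      then consider "k = y" | "y < k" by linarith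
      then show ?thesis
      proof cases
        case 1 then show ?thesis using cc by simp
      next
        case 2 then show ?thesis using IH k cc by auto
      qed
    qed
  qed
  then show ?case unfolding x'_def P_def .
qed

theorem lemma6p1:
  fixes n :: nat and lam beta :: "nat \<Rightarrow> nat"
  assumes "1 \<le> n"
    and "is_partition n lam"
    and "upper_tuple n beta"
    and "\<not> UBP n lam beta"
  shows "\<not> nonpermutable n lam beta"
proof -
  note part = assms(2) and up = assms(3)
  have bu: "\<And>k. 1 \<le> k \<Longrightarrow> k \<le> n \<Longrightarrow> k \<le> beta k \<and> beta k \<le> n"
    using up unfolding upper_tuple_def by auto
  obtain i where i: "i \<in> {1..n}" and viol: "platform n lam beta i < beta i"
    using assms(3,4) unfolding UBP_def by auto
  have i1: "1 \<le> i" "i \<le> n" using i by auto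
  define q where "q = carrel_end n lam i"
  have qP: "q \<in> breaks n lam \<union> {n} \<and> i \<le> q" unfolding q_def carrel_end_def
    by (rule LeastI[where k=n]) (use i1 in auto)
  have qmin: "q \<le> q'" if "q' \<in> breaks n lam \<union> {n}" "i \<le> q'" for q'
    unfolding q_def carrel_end_def by (rule Least_le) (use that in auto)
  have qn: "q \<le> n" using qP by (auto simp: breaks_def)
  have iq: "i \<le> q" using qP by simp
  define x where "x = crit_above n lam beta i"
  have xP: "critical n lam beta x \<and> i \<le> x \<and> x \<le> q"
    unfolding x_def crit_above_def q_def[symmetric]
    by (rule LeastI[where k=q]) (use qP iq in \<open>auto intro: critical.crit_end\<close>)
  have bix: "beta x < beta i" using viol unfolding platform_def x_def by simp
  have dA: "\<forall>k. x < k \<and> k \<le> q \<longrightarrow> int (beta x) - int x < int (beta k) - int k"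
    using critA[of n lam beta x q i] xP qP qmin by blast
  have step: "lam (Suc k) = lam k" if "i \<le> k" "k < q" for k
  proof -
    have "k \<notin> breaks n lam" using qmin[of k] that by auto
    moreover have "1 \<le> k" "k < n" using that i1 qn by auto
    ultimately show ?thesis using part unfolding breaks_def is_partition_def by force
  qed
  have lamc: "lam (i + j) = lam i" if "i + j \<le> q" for j
    using that
  proof (induction j)
    case 0 then show ?case by simp
  next
    case (Suc j)
    then have "lam (Suc (i + j)) = lam (i + j)" using step[of "i + j"] by simp
    then show ?case using Suc by simp
  qed
  have lamc': "lam k = lam i" if "i \<le> k" "k \<le> q" for k
    using lamc[of "k - i"] that by simp
  have mono: "lam k' \<le> lam k" if "1 \<le> k" "k \<le> k'" "k' \<le> n" for k k'
    using that(2,3)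
  proof (induction k' rule: dec_induct)
    case base then show ?case by simp
  next
    case (step m)
    have "m \<in> {1..<n}" using step.hyps step.prems that(1) by simp
    then have "lam (Suc m) \<le> lam m" using part unfolding is_partition_def by blast
    then show ?case using step.IH step.prems by simp
  qed
  have high: "lam k < lam q" if "q < k" "k \<le> n" for k
  proof -
    have "q \<in> breaks n lam" using qP that by auto
    hence "lam (Suc q) < lam q" unfolding breaks_def by simp
    moreover have "lam k \<le> lam (Suc q)" using mono[of "Suc q" k] that by simp
    ultimately show ?thesis by simp
  qed
  have lq: "lam q = lam i" using lamc'[of q] iq by simp
  have L1: "1 \<le> lam i"
  proof (rule ccontr)
    assume "\<not> 1 \<le> lam i"
    hence l0: "lam i = 0" by simp
    have qeq: "q = n"
    proof (rule ccontr)
      assume "q \<noteq> n"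
      hence "q < n" using qn by simp
      thus False using high[of n] lq l0 by simp
    qed
    have "x = n"
    proof (rule ccontr)
      assume "x \<noteq> n"
      hence "x < n" using xP qeq by simp
      hence "int (beta x) - int x < int (beta n) - int n" using dA qeq by simp
      moreover have "beta n \<le> n" "x \<le> beta x" using bu[of n] bu[of x] assms(1) xP i1 \<open>x < n\<close> by auto
      ultimately show False by linarith
    qed
    hence "beta x \<ge> beta i" using bu[of n] bu[of i] i1 assms(1) by simp
    thus False using bix by simp
  qed
  define M where "M = Max (beta ` {i..x})"
  define A where "A = {k \<in> {i..x}. beta k = M}"
  define a where "a = Max A"
  have ixne: "i \<le> x" using xP by simp
  have Mge: "beta k \<le> M" if "k \<in> {i..x}" for k unfolding M_def using that by simp
  have MA: "M \<in> beta ` {i..x}" unfolding M_def using ixne by (intro Max_in) auto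
  have Ane: "A \<noteq> {}" "finite A" using MA unfolding A_def by auto
  have aA: "a \<in> A" unfolding a_def using Ane by (rule Max_in[rotated])
  have aprop: "i \<le> a" "a \<le> x" "beta a = M" using aA unfolding A_def by auto
  have agt: "k \<le> a" if "k \<in> A" for k unfolding a_def using Ane that by simp
  have betaA: "beta k < beta a" if "a < k" "k \<le> x" for k
  proof -
    have "beta k \<le> M" using Mge[of k] that aprop by simp
    moreover have "beta k \<noteq> M"
    proof
      assume "beta k = M"
      hence "k \<in> A" unfolding A_def using that aprop by simp
      thus False using agt[of k] that by simp
    qed
    ultimately show ?thesis using aprop by simp
  qed
  have ax: "a < x"
  proof (rule ccontr)
    assume "\<not> a < x"
    hence "a = x" using aprop by simp
    moreover have "beta i \<le> M" using Mge[of i] ixne by simp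
    ultimately show False using aprop bix by simp
  qed
  have ex: "\<exists>\<pi>. \<pi> permutes {1..n} \<and> \<pi> \<noteq> id \<and> LD n lam beta \<pi> \<noteq> {}"
  proof (rule construction[of a x q n "lam i" lam beta])
    show "a < x" by (rule ax)
    show "x \<le> q" using xP by simp
    show "q \<le> n" by (rule qn)
    show "1 \<le> a" using aprop i1 by simp
    show "1 \<le> lam i" by (rule L1)
    show "lam k = lam i" if "a \<le> k" "k \<le> q" for k using lamc'[of k] that aprop by simp
    show "lam i \<le> lam k" if "1 \<le> k" "k < a" for k
      using mono[of k a] lamc'[of a] that aprop ax xP qn by simp
    show "lam k < lam i" if "q < k" "k \<le> n" for k using high[of k] that lq by simp
    show "lam k' \<le> lam k" if "1 \<le> k" "k \<le> k'" "k' \<le> n" for k k' using mono that by simp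
    show "upper_tuple n beta" by (rule up)
    show "beta k < beta a" if "a < k" "k \<le> x" for k using betaA that by simp
    show "beta x + k < beta k + x" if "x < k" "k \<le> q" for k
      using dA that by auto
  qed
  then show ?thesis unfolding nonpermutable_def by blast
qed

end
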